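(* Let $K \ge 2$, $n \ge 1$, $\Sigma = \{1,\ldots,K\}^n$, and let $\Pr(\cdot \mid A)$ be a probability distribution on $\Sigma$ (the posterior of the labels given data $A$), invariant under relabelling, i.e. $\Pr(\phi(\sigma)\mid A) = \Pr(\sigma \mid A)$ for every permutation $\phi$ of $\{1,\ldots,K\}$, where $(\phi(\sigma))_i = \phi(\sigma_i)$. Let $\rho:\Sigma\to\Sigma$ be the canonical remapping and $\Pr^*(\cdot\mid A)$ the induced posterior on $\Sigma^* = \{\sigma \in \Sigma : \rho(\sigma) = \sigma\}$, i.e. $\Pr^*(\sigma \mid A) = \sum_{\sigma' \in \Sigma:\, \rho(\sigma') = \sigma} \Pr(\sigma' \mid A)$. Define the remapped centroid estimator \[ \hat\sigma_C = \rho\Big( \operatorname*{arg\,min}_{\tilde\sigma \in \Sigma} \mathbb{E}_{\sigma \mid A}\big[ H(\tilde\sigma, \rho(\sigma)) \big] \Big), \qquad H(\tilde\sigma,\sigma) = \sum_{i=1}^n I(\tilde\sigma_i \ne \sigma_i), \] and let $\hat\sigma^* \in \Sigma$ be given by $(\hat\sigma^* )_i = \operatorname*{arg\,max}_{k \in \{1,\ldots,K\}} \Pr^*(\sigma_i = k \mid A)$ for $i = 1,\ldots,n$. Then $\hat\sigma^*$ minimizes $\tilde\sigma \mapsto \mathbb{E}_{\sigma\mid A}[H(\tilde\sigma,\rho(\sigma))]$ over $\Sigma$, and hence $\hat\sigma_C = \rho(\hat\sigma^* )$ (the centroid estimator is a mapped consensus estimator).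
   Context: Canonical remapping: for $\sigma \in \Sigma$, $\rho(\sigma)$ is obtained by relabelling the labels in order of first appearance along $\sigma_1,\sigma_2,\ldots,\sigma_n$: the label of $\sigma_1$ becomes $1$, the next new label encountered becomes $2$, and so on (e.g. $\sigma=(2,2,3,1,3,4,2,1)$ maps to $(1,1,2,3,2,4,1,3)$). Formally, with $\mathrm{ind}(\sigma)_k = \min\{i:\sigma_i = k\}$ and $\mathrm{ord}(\sigma)_k = \sigma\big[\mathrm{ind}(\sigma)_{(k)}\big]$ (the $k$-th label to appear), $\rho(\sigma) = \mathrm{ord}(\sigma)^{-1}(\sigma)$. $\Pr^*(\sigma_i = k \mid A)$ denotes the marginal probability under $\Pr^*$. $I(\cdot)$ is the indicator function. *)

theory Defs
  imports Complex_Main "HOL-Combinatorics.Permutations"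
begin

text \<open>Label vectors sigma in Sigma = {1..K}^n, represented as lists of length n
  (positions 0..n-1 correspond to 1..n in the paper).\<close>

definition Sigma :: "nat \<Rightarrow> nat \<Rightarrow> nat list set" where
  "Sigma K n = {s. length s = n \<and> set s \<subseteq> {1..K}}"

definition first_occ :: "nat list \<Rightarrow> nat \<Rightarrow> nat" where
  "first_occ s i = (LEAST j. s ! j = s ! i)"

text \<open>Canonical remapping rho: the label of s!i is replaced by its rank in the order
  of first appearance, i.e. 1 + the number of distinct labels appearing strictly before
  the first appearance of s!i.\<close>
definition canon :: "nat list \<Rightarrow> nat list" where
  "canon s = map (\<lambda>i. Suc (card {s ! j | j. j < first_occ s i})) [0..<length s]"

definition hamming :: "nat list \<Rightarrow> nat list \<Rightarrow> nat" where
  "hamming t s = card {i. i < length t \<and> t ! i \<noteq> s ! i}"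

definition exp_loss :: "nat \<Rightarrow> nat \<Rightarrow> (nat list \<Rightarrow> real) \<Rightarrow> nat list \<Rightarrow> real" where
  "exp_loss K n P t = (\<Sum>s\<in>Sigma K n. P s * real (hamming t (canon s)))"

definition post_star :: "nat \<Rightarrow> nat \<Rightarrow> (nat list \<Rightarrow> real) \<Rightarrow> nat list \<Rightarrow> real" where
  "post_star K n P s = (\<Sum>s'\<in>{s'\<in>Sigma K n. canon s' = s}. P s')"

definition marg_star :: "nat \<Rightarrow> nat \<Rightarrow> (nat list \<Rightarrow> real) \<Rightarrow> nat \<Rightarrow> nat \<Rightarrow> real" where
  "marg_star K n P i k = (\<Sum>s\<in>{s\<in>Sigma K n. canon s = s \<and> s ! i = k}. post_star K n P s)"

end

theory Submission
  imports Defs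
begin

lemma fo_props:
  assumes "i < length s"
  shows "first_occ s i \<le> i" "s ! first_occ s i = s ! i"
        "\<And>j. j < first_occ s i \<Longrightarrow> s ! j \<noteq> s ! i"
  unfolding first_occ_def
    apply (rule Least_le, simp)
   apply (rule LeastI[of _ i], simp)
  using not_less_Least by blast

lemma fo_pattern:
  assumes len: "length s = length u" and i: "i < length s"
    and pat: "\<And>i j. i < length s \<Longrightarrow> j < length s \<Longrightarrow> (s!i = s!j) = (u!i = u!j)"
  shows "first_occ u i = first_occ s i"
proof -
  have a: "first_occ s i \<le> i" "s ! first_occ s i = s ! i"
    "\<And>j. j < first_occ s i \<Longrightarrow> s ! j \<noteq> s ! i" using fo_props[OF i] by auto
  show ?thesis unfolding first_occ_def[of u]
  proof (rule Least_equality)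
    show "u ! first_occ s i = u ! i" using a pat i by auto
  next
    fix y assume "u ! y = u ! i"
    show "first_occ s i \<le> y"
    proof (rule ccontr)
      assume "\<not> first_occ s i \<le> y"
      hence "y < first_occ s i" by simp
      moreover have "y < length s" using calculation a i by linarith
      ultimately show False using a(3) pat i \<open>u ! y = u ! i\<close> by blast
    qed
  qed
qed

lemma canon_nth:
  "i < length s \<Longrightarrow> canon s ! i = Suc (card (nth s ` {..<first_occ s i}))"
proof -
  assume i: "i < length s"
  have "{s ! j | j. j < first_occ s i} = nth s ` {..<first_occ s i}" by auto
  thus ?thesis using i unfolding canon_def by simp
qed

lemma canon_len[simp]: "length (canon s) = length s"
  unfolding canon_def by simp

lemma canon_pattern:
  assumes len: "length s = length u"
    and pat: "\<And>i j. i < length s \<Longrightarrow> j < length s \<Longrightarrow> (s!i = s!j) = (u!i = u!j)"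
  shows "canon u = canon s"
proof (rule nth_equalityI)
  show "length (canon u) = length (canon s)" using len by simp
next
  fix i assume "i < length (canon u)"
  hence i: "i < length s" using len by simp
  define f where "f = first_occ s i"
  have fu: "first_occ u i = f" using fo_pattern[OF len i pat] f_def by simp
  have fle: "f \<le> i" using fo_props[OF i] f_def by simp
  define g where "g = (\<lambda>x. u ! (SOME j. j < length s \<and> s ! j = x))"
  have gj: "g (s ! j) = u ! j" if "j < length s" for j
  proof -
    have "\<exists>k. k < length s \<and> s ! k = s ! j" using that by blast
    then have "(SOME k. k < length s \<and> s ! k = s ! j) < length s \<and>
      s ! (SOME k. k < length s \<and> s ! k = s ! j) = s ! j" by (rule someI_ex)
    thus ?thesis unfolding g_def using pat that by blast
  qed
  have inj: "inj_on g (nth s ` {..<f})"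
  proof (rule inj_onI)
    fix x y assume "x \<in> nth s ` {..<f}" "y \<in> nth s ` {..<f}" "g x = g y"
    then obtain a b where ab: "a < f" "b < f" "x = s!a" "y = s!b" by auto
    have al: "a < length s" "b < length s" using ab(1,2) fle i by linarith+
    have "u ! a = u ! b" using \<open>g x = g y\<close> ab(3,4) gj[OF al(1)] gj[OF al(2)] by simp
    hence "s ! a = s ! b" using pat[OF al] by simp
    thus "x = y" using ab by simp
  qed
  have img: "nth u ` {..<f} = g ` (nth s ` {..<f})"
  proof -
    have "g ` (nth s ` {..<f}) = (\<lambda>j. g (s ! j)) ` {..<f}" by (simp add: image_image)
    also have "\<dots> = nth u ` {..<f}"
    proof (rule image_cong[OF refl])
      fix j assume "j \<in> {..<f}"
      hence "j < length s" using fle i by simp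
      thus "g (s ! j) = u ! j" by (rule gj)
    qed
    finally show ?thesis by simp
  qed
  have "canon u ! i = Suc (card (nth u ` {..<f}))"
    using canon_nth[of i u] i len fu by simp
  also have "\<dots> = Suc (card (nth s ` {..<f}))" using img card_image[OF inj] by simp
  also have "\<dots> = canon s ! i" using canon_nth[OF i] f_def by simp
  finally show "canon u ! i = canon s ! i" .
qed

lemma canon_pat:
  assumes i: "i < length s" and j: "j < length s"
  shows "(canon s ! i = canon s ! j) = (s ! i = s ! j)"
proof
  assume "s ! i = s ! j"
  hence "first_occ s i = first_occ s j" unfolding first_occ_def by simp
  thus "canon s ! i = canon s ! j" using canon_nth[OF i] canon_nth[OF j] by simp
next
  assume eq: "canon s ! i = canon s ! j"
  show "s ! i = s ! j"
  proof (rule ccontr)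
    assume ne: "s ! i \<noteq> s ! j"
    have lt: "card (nth s ` {..<first_occ s a}) < card (nth s ` {..<first_occ s b})"
      if a: "a < length s" and b: "b < length s" and ab: "first_occ s a < first_occ s b" for a b
    proof (rule psubset_card_mono)
      show "finite (nth s ` {..<first_occ s b})" by simp
      have "s ! a = s ! first_occ s a" using fo_props[OF a] by simp
      moreover have "s ! first_occ s a \<in> nth s ` {..<first_occ s b}" using ab by auto
      moreover have "s ! a \<notin> nth s ` {..<first_occ s a}" using fo_props(3)[OF a] by (metis imageE lessThan_iff)
      moreover have "nth s ` {..<first_occ s a} \<subseteq> nth s ` {..<first_occ s b}" using ab by auto
      ultimately show "nth s ` {..<first_occ s a} \<subset> nth s ` {..<first_occ s b}" by auto
    qed
    have "first_occ s i \<noteq> first_occ s j" using fo_props(2)[OF i] fo_props(2)[OF j] ne by metis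
    hence "first_occ s i < first_occ s j \<or> first_occ s j < first_occ s i" by auto
    thus False using lt[OF i j] lt[OF j i] eq canon_nth[OF i] canon_nth[OF j] by auto
  qed
qed

lemma canon_idem: "canon (canon s) = canon s"
  by (rule canon_pattern) (auto simp: canon_pat)

lemma canon_Sigma:
  assumes s: "s \<in> Sigma K n" shows "canon s \<in> Sigma K n"
proof -
  have len: "length s = n" and rng: "set s \<subseteq> {1..K}" using s by (auto simp: Sigma_def)
  have "canon s ! i \<in> {1..K}" if i: "i < length s" for i
  proof -
    let ?A = "nth s ` {..<first_occ s i}"
    have "?A \<subseteq> set s" using fo_props(1)[OF i] i by auto
    moreover have "s ! i \<notin> ?A" using fo_props(3)[OF i] by (metis imageE lessThan_iff)
    moreover have "s ! i \<in> set s" using i by simp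
    ultimately have "?A \<subset> set s" by blast
    hence "card ?A < card (set s)" by (simp add: psubset_card_mono)
    also have "card (set s) \<le> card {1..K}" using rng by (meson card_mono finite_atLeastAtMost)
    finally show ?thesis using canon_nth[OF i] by simp
  qed
  thus ?thesis using len by (auto simp: Sigma_def in_set_conv_nth)
qed

lemma finite_Sigma: "finite (Sigma K n)"
proof -
  have "Sigma K n = {xs. set xs \<subseteq> {1..K} \<and> length xs = n}" by (auto simp: Sigma_def)
  thus ?thesis using finite_lists_length_eq[of "{1..K}" n] by simp
qed

definition M :: "nat \<Rightarrow> nat \<Rightarrow> (nat list \<Rightarrow> real) \<Rightarrow> nat \<Rightarrow> nat \<Rightarrow> real" where
  "M K n P i k = (\<Sum>s\<in>Sigma K n. if canon s ! i = k then P s else 0)"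

lemma M_marg: "M K n P i k = marg_star K n P i k"
proof -
  let ?S = "{s'\<in>Sigma K n. canon s' ! i = k}"
  let ?T = "{s\<in>Sigma K n. canon s = s \<and> s ! i = k}"
  have fS: "finite ?S" "finite ?T" using finite_Sigma by auto
  have sub: "canon ` ?S \<subseteq> ?T" using canon_Sigma canon_idem by auto
  have "marg_star K n P i k = (\<Sum>y\<in>?T. \<Sum>x\<in>{x\<in>?S. canon x = y}. P x)"
    unfolding marg_star_def post_star_def
    by (rule sum.cong) (auto intro!: sum.cong)
  also have "\<dots> = (\<Sum>x\<in>?S. P x)" by (rule sum.group[OF fS sub])
  also have "\<dots> = M K n P i k" unfolding M_def
    using finite_Sigma by (simp add: sum.inter_filter)
  finally show ?thesis by simp
qed

lemma exp_loss_eq: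
  assumes t: "length t = n" and P_sum: "(\<Sum>s\<in>Sigma K n. P s) = 1"
  shows "exp_loss K n P t = (\<Sum>i<n. 1 - M K n P i (t ! i))"
proof -
  have card: "real (hamming t (canon s)) = (\<Sum>i<n. if t ! i \<noteq> canon s ! i then 1 else 0)" for s
  proof -
    have "{i. i < length t \<and> t ! i \<noteq> canon s ! i} = {i\<in>{..<n}. t ! i \<noteq> canon s ! i}"
      using t by auto
    moreover have "{i\<in>{..<n}. t ! i \<noteq> canon s ! i} = {..<n} \<inter> {i. t ! i \<noteq> canon s ! i}" by auto
    ultimately show ?thesis unfolding hamming_def by (simp add: sum.If_cases)
  qed
  have "exp_loss K n P t = (\<Sum>s\<in>Sigma K n. \<Sum>i<n. P s - (if canon s ! i = t ! i then P s else 0))"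
    unfolding exp_loss_def card by (auto simp: sum_distrib_left intro!: sum.cong)
  also have "\<dots> = (\<Sum>i<n. \<Sum>s\<in>Sigma K n. P s - (if canon s ! i = t ! i then P s else 0))"
    by (rule sum.swap)
  also have "\<dots> = (\<Sum>i<n. 1 - M K n P i (t ! i))"
    unfolding M_def by (simp add: sum_subtractf P_sum)
  finally show ?thesis .
qed

theorem theorem2:
  fixes K n :: nat and P :: "nat list \<Rightarrow> real" and s_hat :: "nat list"
  assumes K: "K \<ge> 2" and n: "n \<ge> 1"
    and P_nonneg: "\<And>s. s \<in> Sigma K n \<Longrightarrow> P s \<ge> 0"
    and P_sum: "(\<Sum>s\<in>Sigma K n. P s) = 1"
    and P_inv: "\<And>\<phi> s. \<phi> permutes {1..K} \<Longrightarrow> s \<in> Sigma K n \<Longrightarrow> P (map \<phi> s) = P s"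
    and s_hat_len: "length s_hat = n"
    and s_hat_range: "\<And>i. i < n \<Longrightarrow> s_hat ! i \<in> {1..K}"
    and s_hat_max: "\<And>i k. i < n \<Longrightarrow> k \<in> {1..K} \<Longrightarrow>
                       marg_star K n P i k \<le> marg_star K n P i (s_hat ! i)"
  shows "(\<forall>t\<in>Sigma K n. exp_loss K n P s_hat \<le> exp_loss K n P t)
       \<and> canon s_hat \<in> canon ` {t\<in>Sigma K n. \<forall>t'\<in>Sigma K n. exp_loss K n P t \<le> exp_loss K n P t'}"
proof -
  have opt: "\<forall>t\<in>Sigma K n. exp_loss K n P s_hat \<le> exp_loss K n P t"
  proof
    fix t assume t: "t \<in> Sigma K n"
    have tl: "length t = n" and tr: "\<And>i. i < n \<Longrightarrow> t ! i \<in> {1..K}"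
      using t by (auto simp: Sigma_def) (metis atLeastAtMost_iff nth_mem subsetD)+
    show "exp_loss K n P s_hat \<le> exp_loss K n P t"
      unfolding exp_loss_eq[OF s_hat_len P_sum] exp_loss_eq[OF tl P_sum]
      by (rule sum_mono) (simp add: M_marg s_hat_max[OF _ tr])
  qed
  have "s_hat \<in> Sigma K n" using s_hat_len s_hat_range
    by (auto simp: Sigma_def in_set_conv_nth)
  thus ?thesis using opt by blast
qed

end
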